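(* Let $\lambda>0$, $n_{\rm eff}>1$, $D_1>0$ and $D_2\ge 0$ be real numbers, and let $n\ge 1$ be an integer. Define $f(x)=\left(x^2+D_1\right)^{1/2}+n_{\rm eff}\,(x+D_2)$, let $\delta=f(0)\bmod\lambda\in[0,\lambda)$, and set $$k_n^*=\frac{f(0)-\delta}{\lambda}+\left\lceil \frac{\delta}{\lambda}\right\rceil+(n-1).$$ If $\Delta^*\ge 0$ is a real number satisfying $\left((\Delta^* )^2+D_1\right)^{1/2}+n_{\rm eff}\,(D_2+\Delta^* )=k_n^*\lambda$, then $\Delta^*<n\lambda$.
   Context: This arises in placing the $n$-th pinching antenna on a dielectric waveguide: $\lambda$ is the carrier wavelength, $n_{\rm eff}$ the effective refractive index of the waveguide, $D_1=y_m^2+d^2$ (with $d>0$ the waveguide height and $(x_m,y_m,0)$ the user location), $D_2=L+x_m\ge 0$, and $\Delta^*$ is the (nonnegative) offset of the antenna from the point on the waveguide closest to the user. $\lceil a\rceil$ denotes the ceiling of $a$. *)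

theory Defs
  imports Complex_Main
begin

definition real_mod :: "real \<Rightarrow> real \<Rightarrow> real" where
  "real_mod a b = a - b * real_of_int \<lfloor>a / b\<rfloor>"

end

theory Submission
  imports Defs
begin

theorem proposition2:
  fixes lam neff D1 D2 Delta :: real and n :: nat
    and f :: "real \<Rightarrow> real" and delta kn :: real
  assumes "lam > 0" and "neff > 1" and "D1 > 0" and "D2 \<ge> 0" and "n \<ge> 1"
    and f_def: "\<And>x. f x = sqrt (x^2 + D1) + neff * (x + D2)"
    and delta_def: "delta = real_mod (f 0) lam"
    and kn_def: "kn = (f 0 - delta) / lam + real_of_int \<lceil>delta / lam\<rceil> + (real n - 1)"
    and "Delta \<ge> 0"
    and "sqrt (Delta^2 + D1) + neff * (D2 + Delta) = kn * lam"
  shows "Delta < real n * lam"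
proof -
  define c where "c = real_of_int \<lceil>delta / lam\<rceil>"
  have c1: "c < delta / lam + 1" unfolding c_def by linarith
  hence c2: "c * lam < delta + lam" using assms(1) by (simp add: field_simps)
  have kl: "kn * lam = f 0 - delta + c * lam + (real n - 1) * lam"
    using assms(1) unfolding kn_def c_def by (simp add: field_simps)
  have s: "sqrt D1 \<le> sqrt (Delta^2 + D1)" by simp
  have f0: "f 0 = sqrt D1 + neff * D2" using f_def by simp
  have "neff * Delta \<ge> Delta" using assms(2,9) using mult_right_mono[of 1 neff Delta] by simp
  then show ?thesis using kl c2 s f0 assms(10) by (simp add: algebra_simps) (smt (verit) s)
qed

end
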